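(* Let $(x,y,z)$ be positive integers with $x\ge2$, $4\le y-x\le 5000$, satisfying $$(x-1)x(x+1)(y-1)y(y+1)=(z-1)z(z+1).$$ Then $(x,y,z)=(F_{2n-1},F_{2n+1},F_{2n}^2)$ for some integer $n\ge1$.
   Context: $F_m$ denotes the $m$-th Fibonacci number: $F_0=0$, $F_1=1$, $F_{m+1}=F_m+F_{m-1}$. The condition $x\ge 2$ excludes the solutions with $x=1$, for which both sides vanish. *)

theory Defs
  imports "HOL-Number_Theory.Fib"
begin

end

theory Submission
  imports Defs
begin


definition psi2 :: "int \<Rightarrow> int \<Rightarrow> int \<Rightarrow> int \<Rightarrow> int \<Rightarrow> int" where
 "psi2 x t c m y = x*y*(y*(y - t) + c) - m"

function wup :: "int \<Rightarrow> int \<Rightarrow> int \<Rightarrow> int \<Rightarrow> int \<Rightarrow> int \<Rightarrow> int option" where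
 "wup x t c m h k = (if k \<le> 0 then None else
    let p = psi2 x t c m (h+1) in if 0 < p then Some h else if p < 0 then wup x t c m (h+1) (k-1) else None)"
  by auto
termination by (relation "measure (\<lambda>(x,t,c,m,h,k). nat k)") auto

function wdown :: "int \<Rightarrow> int \<Rightarrow> int \<Rightarrow> int \<Rightarrow> int \<Rightarrow> int \<Rightarrow> int option" where
 "wdown x t c m h k = (if k \<le> 0 then None else
    let p = psi2 x t c m h in if p < 0 then Some h else if 0 < p then wdown x t c m (h-1) (k-1) else None)"
  by auto
termination by (relation "measure (\<lambda>(x,t,c,m,h,k). nat k)") auto

definition findc :: "int \<Rightarrow> int \<Rightarrow> int \<Rightarrow> int \<Rightarrow> int \<Rightarrow> int option" where
 "findc x t c m h = (let p = psi2 x t c m h in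
    if p < 0 then wup x t c m h 50 else if 0 < p then wdown x t c m (h-1) 50 else None)"

function loopd :: "int \<Rightarrow> int \<Rightarrow> int \<Rightarrow> int \<Rightarrow> bool" where
 "loopd x d hi h = (if hi < d then True else
   (let Y = x + 5000; t = 3*d*x; c = x*x + 3*d*d - 2; m = d*d*d - d in
    if 2*Y < t \<or> c - 1 < Y*(t - Y) \<or> 2*d*d < 3*x*x \<or> m mod x \<noteq> 0
    then loopd x (d+1) hi (h + 3*x - 1)
    else (case findc x t c m h of None \<Rightarrow> False
          | Some r \<Rightarrow> (if t \<le> 2*r then loopd x (d+1) hi (r + 3*x - 1) else False))))"
  by auto
termination by (relation "measure (\<lambda>(x,d,hi,h). nat (hi + 1 - d))") auto

declare loopd.simps[simp del] wup.simps[simp del] wdown.simps[simp del]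

definition chkx :: "int \<Rightarrow> bool" where
 "chkx x = (let d0 = (6*x) div 5 in loopd x d0 ((x*(x+5001)) div (3*x*x-2)) (3*d0*x - d0 div x - 1))"

definition good :: "int \<Rightarrow> int \<Rightarrow> int \<Rightarrow> int \<Rightarrow> int \<Rightarrow> bool" where
 "good x t c m r = (psi2 x t c m r < 0 \<and> 0 < psi2 x t c m (r+1))"

lemma wup_sound: "psi2 x t c m h < 0 \<Longrightarrow> wup x t c m h k = Some r \<Longrightarrow> good x t c m r"
proof (induction x t c m h k rule: wup.induct)
  case (1 x t c m h k)
  show ?case using "1.prems" "1.IH"
    by (subst (asm) wup.simps) (auto simp: Let_def good_def split: if_splits)
qed

lemma wdown_sound: "0 < psi2 x t c m (h+1) \<Longrightarrow> wdown x t c m h k = Some r \<Longrightarrow> good x t c m r"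
proof (induction x t c m h k rule: wdown.induct)
  case (1 x t c m h k)
  show ?case using "1.prems" "1.IH"
    by (subst (asm) wdown.simps) (auto simp: Let_def good_def split: if_splits)
qed

lemma findc_sound: "findc x t c m h = Some r \<Longrightarrow> good x t c m r"
  unfolding findc_def Let_def
  using wup_sound[of x t c m h 50 r] wdown_sound[of x t c m "h-1" 50 r]
  by (auto split: if_splits)

lemma loopd_sound:
  "loopd x d hi h \<Longrightarrow> d \<le> e \<Longrightarrow> e \<le> hi \<Longrightarrow>
    2*(x+5000) < 3*e*x \<or> (x*x + 3*e*e - 2) - 1 < (x+5000)*(3*e*x - (x+5000)) \<or> 2*e*e < 3*x*x
    \<or> (e*e*e - e) mod x \<noteq> 0 \<or> (\<exists>r. 3*e*x \<le> 2*r \<and> good x (3*e*x) (x*x + 3*e*e - 2) (e*e*e - e) r)"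
proof (induction x d hi h rule: loopd.induct)
  case (1 x d hi h)
  show ?case
  proof (cases "e = d")
    case True
    then show ?thesis using "1.prems"
      by (subst (asm) loopd.simps) (auto simp: Let_def split: if_splits option.splits dest: findc_sound)
  next
    case False
    then have "d + 1 \<le> e" using "1.prems" by simp
    then show ?thesis using "1.prems" "1.IH"
      by (subst (asm) loopd.simps) (auto simp: Let_def split: if_splits option.splits)
  qed
qed


function chkr :: "int \<Rightarrow> int \<Rightarrow> bool" where
 "chkr lo hi = (if hi < lo then True else chkx lo \<and> chkr (lo+1) hi)"
  by auto
termination by (relation "measure (\<lambda>(lo,hi). nat (hi + 1 - lo))") auto
declare chkr.simps[simp del]

lemma chkr_sound: "chkr lo hi \<Longrightarrow> lo \<le> x \<Longrightarrow> x \<le> hi \<Longrightarrow> chkx x"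
proof (induction lo hi rule: chkr.induct)
  case (1 lo hi)
  then show ?case
    by (subst (asm) chkr.simps) (cases "x = lo"; auto split: if_splits)
qed

lemma cross_contra:
  fixes x y t c m r :: int
  assumes "0 < x" "0 < y" "0 < t" "t \<le> 2*y" "t \<le> 2*r" "0 \<le> m"
    and py: "psi2 x t c m y = 0" and g: "good x t c m r"
  shows False
proof -
  define f where "f u = u*(u - t) + c" for u
  have fd: "f b - f a = (b - a)*(a + b - t)" for a b by (simp add: f_def algebra_simps)
  have fy: "x*y*f y = m" using py by (simp add: psi2_def f_def)
  have gr: "x*r*f r < m" "m < x*(r+1)*f (r+1)" using g by (auto simp: good_def psi2_def f_def)
  have xy: "0 < x*y" using assms by simp
  have fy0: "0 \<le> f y"
  proof (rule ccontr)
    assume "\<not> 0 \<le> f y"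
    then have "x*y*f y < 0" using xy by (simp add: mult_pos_neg)
    then show False using fy \<open>0 \<le> m\<close> by simp
  qed
  have r0: "0 < r" using assms by linarith
  show False
  proof (cases "y \<le> r")
    case True
    have "0 \<le> (r - y)*(y + r - t)" using True assms by simp
    then have "f y \<le> f r" using fd[of r y] by simp
    moreover have "x*y \<le> x*r" using True assms by simp
    ultimately have "x*y*f y \<le> x*r*f r" using fy0 xy by (meson mult_mono less_imp_le order_trans fy0 mult_nonneg_nonneg)
    then show False using fy gr by simp
  next
    case False
    have "0 \<le> (y - (r+1))*((r+1) + y - t)" using False assms by simp
    then have fle: "f (r+1) \<le> f y" using fd[of y "r+1"] by simp
    show False
    proof (cases "f (r+1) \<le> 0")
      case True
      have "0 < x*(r+1)" using assms r0 by simp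
      then have "x*(r+1)*f (r+1) \<le> 0" using True by (simp add: mult_nonneg_nonpos)
      then show False using gr \<open>0 \<le> m\<close> by simp
    next
      case False
      have "x*(r+1) \<le> x*y" using \<open>\<not> y \<le> r\<close> assms by simp
      then have "x*(r+1)*f (r+1) \<le> x*y*f y" using fle False xy
        by (meson less_le_not_le mult_mono nle_le)
      then show False using fy gr by simp
    qed
  qed
qed


lemma r1: "chkr 2 2" by code_simp
lemma r2: "chkr 3 3" by code_simp
lemma r3: "chkr 4 4" by code_simp
lemma r4: "chkr 5 6" by code_simp
lemma r5: "chkr 7 9" by code_simp
lemma r6: "chkr 10 14" by code_simp
lemma r7: "chkr 15 40" by code_simp

lemma chk_all: "2 \<le> x \<Longrightarrow> x \<le> 40 \<Longrightarrow> chkx x"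
proof -
  assume a: "2 \<le> x" "x \<le> 40"
  consider "x \<le> 2" | "x = 3" | "x = 4" | "5 \<le> x \<and> x \<le> 6" | "7 \<le> x \<and> x \<le> 9"
    | "10 \<le> x \<and> x \<le> 14" | "15 \<le> x" by linarith
  then show ?thesis
    using a chkr_sound[OF r1] chkr_sound[OF r2] chkr_sound[OF r3] chkr_sound[OF r4]
      chkr_sound[OF r5] chkr_sound[OF r6] chkr_sound[OF r7]
    by cases auto
qed



lemma fib_step: "int (fib (m+4)) = 3 * int (fib (m+2)) - int (fib m)"
  by (simp add: eval_nat_numeral)

lemma fib_pell:
  fixes x y :: int
  shows "1 \<le> x \<Longrightarrow> x < y \<Longrightarrow> x*x - 3*x*y + y*y = -1 \<Longrightarrow>
     \<exists>k. x = int (fib (2*k+1)) \<and> y = int (fib (2*k+3))"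
proof (induction "nat x" arbitrary: x y rule: less_induct)
  case less
  show ?case
  proof (cases "x = 1")
    case True
    then have "(y - 1)*(y - 2) = 0" using less.prems by (simp add: algebra_simps)
    then have "y = 2" using less.prems True by simp
    then show ?thesis using True
      by (intro exI[of _ 0]) (simp add: numeral_eq_Suc)
  next
    case False
    then have x2: "2 \<le> x" using less.prems by simp
    define y' where "y' = 3*x - y"
    have prod: "y'*y = x*x + 1" using less.prems(3) unfolding y'_def by (simp add: algebra_simps)
    have y0: "0 < y" using less.prems by simp
    have yp: "0 < y'"
    proof (rule ccontr)
      assume "\<not> 0 < y'"
      then have "y'*y \<le> 0" using y0 by (simp add: mult_nonpos_nonneg)
      moreover have "0 \<le> x*x" by simp
      ultimately show False using prod by linarith
    qed
    have "x*(x+1) \<le> x*y" using less.prems x2 by (intro mult_left_mono) auto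
    then have "x*x + x \<le> x*y" by (simp add: algebra_simps)
    then have "y'*y < x*y" using prod x2 by simp
    then have y'x: "y' < x" using y0 by simp
    have eq': "y'*y' - 3*y'*x + x*x = -1" using less.prems(3) unfolding y'_def
      by (simp add: algebra_simps)
    have "nat y' < nat x" using y'x yp by simp
    from less.hyps[OF this _ y'x eq'] yp obtain k where
      k: "y' = int (fib (2*k+1))" "x = int (fib (2*k+3))" by auto
    have e1: "2*k+1+4 = 2*(k+1)+3" "2*k+1+2 = 2*k+3" by simp_all
    have "int (fib (2*k+1+4)) = 3 * int (fib (2*k+1+2)) - int (fib (2*k+1))" by (rule fib_step)
    then have f5: "int (fib (2*(k+1)+3)) = 3 * int (fib (2*k+3)) - int (fib (2*k+1))"
      by (simp only: e1)
    have "y = 3*x - y'" by (simp add: y'_def)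
    then have "y = int (fib (2*(k+1)+3))" using k f5 by linarith
    moreover have "2*(k+1)+1 = 2*k+3" by simp
    then have "x = int (fib (2*(k+1)+1))" using k(2) by (simp only:)
    ultimately show ?thesis by blast
  qed
qed

lemma cassini_odd: "int (fib (2*k+3)) * int (fib (2*k+1)) - int (fib (2*k+2))^2 = 1"
proof -
  have e: "Suc (Suc (2*k+1)) = 2*k+3" "Suc (2*k+1) = 2*k+2" "Suc (2*k+2) = 2*k+3" by simp_all
  have c: "int (fib (2*k+3) * fib (2*k+1)) - int ((fib (2*k+2))\<^sup>2) = - ((-1)^(2*k+1))"
    using fib_Cassini_int[of "2*k+1"] by (simp only: e)
  have m: "(-1::int)^(2*k+1) = -1" by simp
  from c show ?thesis by (simp only: of_nat_mult of_nat_power m)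
qed

lemma main_aux:
  fixes x y z :: int
  assumes chk: "\<And>x. 2 \<le> x \<Longrightarrow> x \<le> 40 \<Longrightarrow> chkx x"
    and "x > 0" and "y > 0" and "z > 0"
    and "x \<ge> 2"
    and "4 \<le> y - x" and "y - x \<le> 5000"
    and E: "(x - 1) * x * (x + 1) * ((y - 1) * y * (y + 1)) = (z - 1) * z * (z + 1)"
  shows "\<exists>n::nat. n \<ge> 1 \<and> x = int (fib (2*n - 1)) \<and> y = int (fib (2*n + 1))
           \<and> z = int (fib (2*n)) ^ 2"
proof -
  have x2: "2 \<le> x" and yx: "x + 4 \<le> y" and yY: "y \<le> x + 5000" and z0: "0 < z"
    using assms by auto
  have x0: "0 < x" and y0: "0 < y" using x2 yx by auto
  define P where "P = x*y"
  have P0: "0 < P" using x0 y0 by (simp add: P_def)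
  have A: "(x - 1) * x * (x + 1) * ((y - 1) * y * (y + 1)) = P^3 - P*(x*x + y*y) + P"
    by (simp add: P_def algebra_simps power3_eq_cube)
  have Bz: "(z - 1) * z * (z + 1) = z^3 - z" by (simp add: algebra_simps power3_eq_cube)
  have AB: "P^3 - P*(x*x + y*y) + P = z^3 - z" using E A Bz by simp
  have zP: "z < P"
  proof (rule ccontr)
    assume "\<not> z < P"
    then have zP: "P \<le> z" by simp
    have "0 \<le> (z - P)*(z*z + z*P + P*P - 1)"
      using zP P0 z0 by (intro mult_nonneg_nonneg) (auto simp: add_nonneg_nonneg, smt (verit) mult_pos_pos)
    moreover have "(z - P)*(z*z + z*P + P*P - 1) = (z^3 - z) - (P^3 - P)"
      by (simp add: algebra_simps power3_eq_cube)
    ultimately have "P^3 - P \<le> z^3 - z" by simp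
    then have "0 \<le> P*(2 - x*x - y*y)" using AB by (simp add: algebra_simps)
    moreover have "2 - x*x - y*y < 0"
    proof -
      have "4 \<le> x*x" using x2 by (metis mult_mono' numeral_Bit0 one_add_one add_2_eq_Suc' dual_order.trans
          mult_2 mult_2_right numeral_2_eq_2 order.refl zero_le_numeral)
      moreover have "0 \<le> y*y" by simp
      ultimately show ?thesis by linarith
    qed
    moreover have "P*(2 - x*x - y*y) < 0" using P0 \<open>2 - x*x - y*y < 0\<close> by (rule mult_pos_neg)
    ultimately show False by linarith
  qed
  define d where "d = P - z"
  have d1: "1 \<le> d" using zP by (simp add: d_def)
  have zd: "z = x*y - d" by (simp add: d_def P_def)
  define M where "M = y*(y - 3*d*x) + x*x + 3*d*d - 2"
  have id: "x*y*M = d*d*d - d"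
  proof -
    have "x*y*M - (d*d*d - d) = (z - 1) * z * (z + 1) - (x - 1) * x * (x + 1) * ((y - 1) * y * (y + 1))"
      unfolding zd M_def by (simp add: algebra_simps)
    then show ?thesis using E by simp
  qed
  have xy0: "0 < x*y" using P0 by (simp add: P_def)
  show ?thesis
  proof (cases "d = 1")
    case True
    then have "x*y*M = 0" using id by simp
    then have "M = 0" using x0 y0 by simp
    then have pell: "x*x - 3*x*y + y*y = -1" using True by (simp add: M_def algebra_simps)
    obtain k where k: "x = int (fib (2*k+1))" "y = int (fib (2*k+3))"
      using fib_pell[OF _ _ pell] x2 yx by auto
    have "z = x*y - 1" using zd True by simp
    then have "z = int (fib (2*k+2))^2" using k cassini_odd[of k] by (simp add: algebra_simps)
    moreover have "2*(k+1) - 1 = 2*k+1" "2*(k+1)+1 = 2*k+3" "2*(k+1) = 2*k+2" by simp_all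
    ultimately show ?thesis using k by (intro exI[of _ "k+1"]) (simp only:, simp)
  next
    case False
    then have d2: "2 \<le> d" using d1 by simp

    have d0: "0 < d" using d2 by simp
    have d6: "6*d \<le> x*y"
    proof (rule ccontr)
      assume "\<not> 6*d \<le> x*y"
      then have "6*z < 5*P" using zd by (simp add: P_def)
      then have "(6*z)^3 < (5*P)^3" using z0 by (intro power_strict_mono) auto
      then have c1: "216*z^3 < 125*P^3" by (simp add: power_mult_distrib)
      have x4: "4 \<le> x*x" using x2 mult_mono[of 2 x 2 x] by simp
      have y36: "36 \<le> y*y" using yx x2 mult_mono[of 6 y 6 y] by simp
      have hx: "3*x^3 \<le> 4*(x^3 - x)"
      proof -
        have "x*4 \<le> x*(x*x)" using x4 x0 by (intro mult_left_mono) auto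
        then show ?thesis by (simp add: power3_eq_cube algebra_simps)
      qed
      have hy: "35*y^3 \<le> 36*(y^3 - y)"
      proof -
        have "y*36 \<le> y*(y*y)" using y36 y0 by (intro mult_left_mono) auto
        then show ?thesis by (simp add: power3_eq_cube algebra_simps)
      qed
      have "(3*x^3)*(35*y^3) \<le> (4*(x^3 - x))*(36*(y^3 - y))"
      proof -
        have "0 \<le> x^3" "0 \<le> y^3" using x0 y0 by simp_all
        then show ?thesis by (intro mult_mono[OF hx hy]; use hx in linarith)
      qed
      moreover have "(3*x^3)*(35*y^3) = 105*P^3" by (simp add: P_def power_mult_distrib)
      moreover have "(4*(x^3 - x))*(36*(y^3 - y)) = 144*(z^3 - z)"
        using A E Bz AB by (simp add: P_def power3_eq_cube algebra_simps)
      ultimately have "105*P^3 \<le> 144*z^3 - 144*z" by (simp add: algebra_simps)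
      moreover have "0 \<le> P^3" using P0 by simp
      ultimately show False using c1 z0 by linarith
    qed
    have m0: "0 < d*d*d - d"
    proof -
      have "d*1 < d*(d*d)" using d2 mult_strict_left_mono[of 1 "d*d" d] mult_mono[of 2 d 2 d] by simp
      then show ?thesis by (simp add: algebra_simps)
    qed
    have M1: "1 \<le> M"
    proof (rule ccontr)
      assume "\<not> 1 \<le> M"
      then have "M \<le> 0" by simp
      then have "x*y*M \<le> 0" using xy0 by (simp add: mult_nonneg_nonpos)
      then show False using id m0 by simp
    qed
    have br: "3*d*x \<le> 2*y"
    proof (rule ccontr)
      assume "\<not> 3*d*x \<le> 2*y"
      then have "2*y < 3*d*x" by simp
      have h1: "2*(y*y) < 3*(d*(x*y))"
        using mult_strict_right_mono[OF \<open>2*y < 3*d*x\<close> y0] by (simp add: algebra_simps)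
      have h2: "x*x < x*y" using x0 yx by simp
      have h3: "6*(d*d) \<le> d*(x*y)" using mult_left_mono[OF d6, of d] d0 by (simp add: algebra_simps)
      have h4: "x*y \<le> d*(x*y)" using mult_right_mono[OF d1, of "x*y"] xy0 by simp
      have h5: "3 \<le> y*y - 3*(d*(x*y)) + x*x + 3*(d*d)" using M1 by (simp add: M_def algebra_simps)
      from h1 h2 h3 h4 h5 show False by linarith
    qed
    define t where "t = 3*d*x"
    define c where "c = x*x + 3*d*d - 2"
    define m where "m = d*d*d - d"
    define Y where "Y = x + 5000"
    have Mt: "M = y*(y - t) + c" by (simp add: M_def t_def c_def)
    have f1: "\<not> 2*Y < t" using br yY by (simp add: Y_def t_def)
    have f2: "\<not> c - 1 < Y*(t - Y)"
    proof -
      have "0 \<le> (Y - y)*(Y + y - t)" using br yY by (intro mult_nonneg_nonneg) (auto simp: Y_def t_def)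
      moreover have "(Y - y)*(Y + y - t) = y*(t - y) - Y*(t - Y)" by (simp add: algebra_simps)
      ultimately have "Y*(t - Y) \<le> y*(t - y)" by simp
      moreover have "y*(t - y) \<le> c - 1" using M1 Mt by (simp add: algebra_simps)
      ultimately show ?thesis by simp
    qed
    have xym: "x*y \<le> d*d*d - d"
    proof -
      have "x*y*1 \<le> x*y*M" using M1 xy0 by (intro mult_left_mono) auto
      then show ?thesis using id by simp
    qed
    have f3: "3*x*x < 2*d*d"
    proof -
      have "3*d*x*x \<le> 2*y*x" using br x0 by (intro mult_right_mono) auto
      then have a: "d*(3*x*x) \<le> 2*(x*y)" by (simp add: algebra_simps)
      have b1: "x*y \<le> d*(d*d) - d" using xym by (simp add: algebra_simps)
      have b2: "d*(2*d*d) = 2*(d*(d*d))" by (simp add: algebra_simps)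
      have "d*(3*x*x) < d*(2*d*d)" using a b1 b2 d0 by linarith
      then show ?thesis using d0 by simp
    qed
    have f4: "m mod x = 0"
    proof -
      have "m = x*(y*M)" using id by (simp add: m_def algebra_simps)
      then show ?thesis by simp
    qed
    have dx: "x \<le> d"
    proof (rule ccontr)
      assume "\<not> x \<le> d"
      then have "d*d < x*x" using d0 by (intro mult_strict_mono) auto
      moreover have "3*(x*x) < 2*(d*d)" using f3 by (simp add: algebra_simps)
      moreover have "0 \<le> x*x" by simp
      ultimately show False by linarith
    qed
    have d56: "6*x \<le> 5*d"
    proof (rule ccontr)
      assume "\<not> 6*x \<le> 5*d"
      then have "5*d < 6*x" by simp
      have "(5*d)*(5*d) < (6*x)*(6*x)"
        by (rule mult_strict_mono[of "5*d" "6*x" "5*d" "6*x"]) (use \<open>5*d < 6*x\<close> d0 x0 in linarith)+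
      then have "25*(d*d) < 36*(x*x)" by (simp add: algebra_simps)
      moreover have "3*(x*x) < 2*(d*d)" using f3 by (simp add: algebra_simps)
      moreover have "0 \<le> x*x" by simp
      ultimately show False by linarith
    qed
    define w where "w = 3*d*x - y"
    have xw: "x*w \<le> x + 2*d"
    proof (cases "w \<le> 0")
      case True
      then have "x*w \<le> 0" using x0 by (simp add: mult_nonneg_nonpos)
      then show ?thesis using x0 d0 by simp
    next
      case False
      have yw: "y*w \<le> x*x + 3*d*d - 3" using M1 unfolding M_def w_def by (simp add: algebra_simps)
      have "(3*d*x)*w \<le> (2*y)*w" using br False by (intro mult_right_mono) auto
      then have "3*d*x*w \<le> 2*x*x + 6*d*d - 6" using yw by simp
      moreover have "2*x*x \<le> 3*d*x" using dx x0 by simp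
      ultimately have "(3*d)*(x*w) < (3*d)*(x + 2*d)" by (simp add: algebra_simps)
      then show ?thesis using d0 by simp
    qed
    have dq: "d*(3*x*x - 2) \<le> x*(x+5001)"
    proof -
      have "3*d*x*x = x*y + x*w" by (simp add: w_def algebra_simps)
      moreover have "x*y \<le> x*(x+5000)" using yY x0 by simp
      ultimately show ?thesis using xw by (simp add: algebra_simps)
    qed
    have q0: "0 < 3*x*x - 2" using x2 mult_mono[of 2 x 2 x] by simp
    have dhi: "d \<le> (x*(x+5001)) div (3*x*x - 2)"
    proof -
      have "(d*(3*x*x - 2)) div (3*x*x - 2) \<le> (x*(x+5001)) div (3*x*x - 2)"
        using dq q0 by (intro zdiv_mono1) auto
      then show ?thesis using q0 by simp
    qed
    have dlo: "(6*x) div 5 \<le> d"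
    proof -
      have "(6*x) div 5 \<le> (5*d) div 5" using d56 by (intro zdiv_mono1) auto
      then show ?thesis by simp
    qed
    have x40: "x \<le> 40"
    proof (rule ccontr)
      assume "\<not> x \<le> 40"
      then have x41: "41 \<le> x" by simp
      have "(6*x)*(3*x*x - 2) \<le> (5*d)*(3*x*x - 2)" using d56 q0 by (intro mult_right_mono) auto
      also have "\<dots> \<le> 5*(x*(x+5001))" using dq by simp
      finally have "x*(6*(3*x*x - 2)) \<le> x*(5*(x+5001))" by (simp add: algebra_simps)
      then have "6*(3*x*x - 2) \<le> 5*(x+5001)" using x0 by simp
      moreover have "41*x \<le> x*x" using x41 x0 by simp
      ultimately show False using x41 by simp
    qed
    have cx: "chkx x" using chk x2 x40 by simp
    then have lp: "loopd x ((6*x) div 5) ((x*(x+5001)) div (3*x*x-2))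
        (3*((6*x) div 5)*x - ((6*x) div 5) div x - 1)" by (simp add: chkx_def Let_def)
    from loopd_sound[OF lp dlo dhi] f1 f2 f3 f4
    obtain r where r: "3*d*x \<le> 2*r" "good x (3*d*x) (x*x + 3*d*d - 2) (d*d*d - d) r"
      by (auto simp: Y_def t_def c_def m_def)
    have py: "psi2 x t c m y = 0" using id Mt by (simp add: psi2_def m_def)
    show ?thesis
      using cross_contra[OF x0 y0 _ _ _ _ py, of r] r br d0 x0 m0
      by (auto simp: t_def c_def m_def)
  qed
qed


theorem corollary2:
  fixes x y z :: int
  assumes "x > 0" and "y > 0" and "z > 0"
    and "x \<ge> 2"
    and "4 \<le> y - x" and "y - x \<le> 5000"
    and "(x - 1) * x * (x + 1) * ((y - 1) * y * (y + 1)) = (z - 1) * z * (z + 1)"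
  shows "\<exists>n::nat. n \<ge> 1 \<and> x = int (fib (2*n - 1)) \<and> y = int (fib (2*n + 1))
           \<and> z = int (fib (2*n)) ^ 2"
  using main_aux[OF chk_all assms] by simp

end
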